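(* Let $v_1\ge v_2>0$ with $v_2<2$. A strategy profile $(X,Y)$ is a Nash equilibrium of the discrete all-pay auction with valuations $v_1,v_2$ if and only if $Y=\delta_0$ and: if $v_1/2>1$ then $X=\delta_1$; if $v_1/2=1$ then $X=(1-\alpha)\delta_0+\alpha\delta_1$ for some $\alpha\in[0,1]$; if $v_1/2<1$ then $X=\delta_0$.
   Context: Discrete all-pay auction: two players, 1 and 2, value a prize at $v_1$ and $v_2$ respectively, where $v_1\ge v_2>0$. A (mixed) strategy is a probability distribution on $\mathbb{Z}_{\ge 0}$ with finite mean, identified with a $\mathbb{Z}_{\ge0}$-valued random variable; the two players' choices are independent. If player 1 uses $X$ and player 2 uses $Y$, the expected payoffs are $P^1(X,Y)=v_1\Pr(X>Y)+\frac{v_1}{2}\Pr(X=Y)-\mathbf{E}(X)$ and $P^2(Y,X)=v_2\Pr(Y>X)+\frac{v_2}{2}\Pr(X=Y)-\mathbf{E}(Y)$. A Nash equilibrium of the all-pay auction is a pair $(X,Y)$ with $P^1(X,Y)\ge P^1(X',Y)$ and $P^2(Y,X)\ge P^2(Y',X)$ for all strategies $X',Y'$. $\delta_j$ denotes the point mass at $j$; $(1-\alpha)\delta_0+\alpha\delta_1$ is the mixture. *)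

theory Defs
  imports "HOL-Probability.Probability"
begin

definition strategy :: "nat pmf \<Rightarrow> bool" where
  "strategy X \<longleftrightarrow> integrable (measure_pmf X) (\<lambda>n. real n)"

definition mean :: "nat pmf \<Rightarrow> real" where
  "mean X = measure_pmf.expectation X (\<lambda>n. real n)"

definition payoff :: "real \<Rightarrow> nat pmf \<Rightarrow> nat pmf \<Rightarrow> real" where
  "payoff v X Y =
     v * measure_pmf.prob (pair_pmf X Y) {(x, y). x > y}
     + v / 2 * measure_pmf.prob (pair_pmf X Y) {(x, y). x = y}
     - mean X"

definition nash_eq :: "real \<Rightarrow> real \<Rightarrow> nat pmf \<Rightarrow> nat pmf \<Rightarrow> bool" where
  "nash_eq v1 v2 X Y \<longleftrightarrow> strategy X \<and> strategy Y \<and>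
     (\<forall>X'. strategy X' \<longrightarrow> payoff v1 X' Y \<le> payoff v1 X Y) \<and>
     (\<forall>Y'. strategy Y' \<longrightarrow> payoff v2 Y' X \<le> payoff v2 Y X)"

text \<open>The mixture (1-\<alpha>) \<delta>_0 + \<alpha> \<delta>_1.\<close>
definition mix01 :: "real \<Rightarrow> nat pmf" where
  "mix01 \<alpha> = map_pmf (\<lambda>b. if b then 1 else 0) (bernoulli_pmf \<alpha>)"

end

theory Submission imports Defs begin

definition g :: "real \<Rightarrow> nat pmf \<Rightarrow> nat \<Rightarrow> real" where
  "g v Y x = v * measure_pmf.prob Y {y. y < x} + v / 2 * pmf Y x - real x"

lemma prob_pair:
  "measure_pmf.prob (pair_pmf X Y) A =
   measure_pmf.expectation X (\<lambda>a. measure_pmf.prob Y {b. (a,b)\<in>A})"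
proof -
  have "ennreal (measure_pmf.prob (pair_pmf X Y) A) = emeasure (pair_pmf X Y) A"
    by (simp add: measure_pmf.emeasure_eq_measure)
  also have "\<dots> = (\<integral>\<^sup>+x. indicator A x \<partial>pair_pmf X Y)" by simp
  also have "\<dots> = (\<integral>\<^sup>+a. \<integral>\<^sup>+b. indicator A (a,b) \<partial>Y \<partial>X)"
    by (rule nn_integral_pair_pmf')
  also have "\<dots> = (\<integral>\<^sup>+a. ennreal (measure_pmf.prob Y {b. (a,b)\<in>A}) \<partial>X)"
  proof (rule nn_integral_cong)
    fix a
    have "(\<integral>\<^sup>+b. indicator A (a,b) \<partial>Y) = (\<integral>\<^sup>+b. indicator {b. (a,b)\<in>A} b \<partial>Y)"
      by (rule nn_integral_cong) (simp add: indicator_def)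
    also have "\<dots> = emeasure Y {b. (a,b)\<in>A}" by simp
    finally show "(\<integral>\<^sup>+b. indicator A (a,b) \<partial>Y) = ennreal (measure_pmf.prob Y {b. (a,b)\<in>A})"
      by (simp add: measure_pmf.emeasure_eq_measure)
  qed
  also have "\<dots> = ennreal (measure_pmf.expectation X (\<lambda>a. measure_pmf.prob Y {b. (a,b)\<in>A}))"
    by (rule nn_integral_eq_integral)
       (auto intro!: measure_pmf.integrable_const_bound[where B=1])
  finally show ?thesis
    by (simp add: Bochner_Integration.integral_nonneg)
qed

lemma payoff_g:
  assumes "strategy X"
  shows "payoff v X Y = measure_pmf.expectation X (g v Y)"
proof -
  have i1: "integrable (measure_pmf X) (\<lambda>x. v * measure_pmf.prob Y {y. y < x})"
    by (intro integrable_mult_right measure_pmf.integrable_const_bound[where B=1]) auto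
  have i2: "integrable (measure_pmf X) (\<lambda>x. v / 2 * pmf Y x)"
    by (intro integrable_mult_right measure_pmf.integrable_const_bound[where B=1]) (auto simp: pmf_le_1)
  have i3: "integrable (measure_pmf X) (\<lambda>x. real x)" using assms by (simp add: strategy_def)
  have p1: "measure_pmf.prob (pair_pmf X Y) {(x, y). x > y} = measure_pmf.expectation X (\<lambda>x. measure_pmf.prob Y {y. y < x})"
    by (simp add: prob_pair)
  have p2: "measure_pmf.prob (pair_pmf X Y) {(x, y). x = y} = measure_pmf.expectation X (\<lambda>x. pmf Y x)"
  proof -
    have "\<And>x. {b. (x,b) \<in> {(x, y). x = y}} = {x}" by auto
    then show ?thesis by (simp add: prob_pair measure_pmf_single)
  qed
  have "measure_pmf.expectation X (g v Y) =
     measure_pmf.expectation X (\<lambda>x. v * measure_pmf.prob Y {y. y < x}) +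
     measure_pmf.expectation X (\<lambda>x. v / 2 * pmf Y x) - measure_pmf.expectation X (\<lambda>x. real x)"
    unfolding g_def using i1 i2 i3
    by (simp add: Bochner_Integration.integral_add Bochner_Integration.integral_diff)
  then show ?thesis
    unfolding payoff_def mean_def p1 p2 by simp
qed

lemma g_integrable:
  assumes "strategy X" shows "integrable (measure_pmf X) (g v Y)"
proof -
  have i1: "integrable (measure_pmf X) (\<lambda>x. v * measure_pmf.prob Y {y. y < x})"
    by (intro integrable_mult_right measure_pmf.integrable_const_bound[where B=1]) auto
  have i2: "integrable (measure_pmf X) (\<lambda>x. v / 2 * pmf Y x)"
    by (intro integrable_mult_right measure_pmf.integrable_const_bound[where B=1]) (auto simp: pmf_le_1)
  have i3: "integrable (measure_pmf X) (\<lambda>x. real x)" using assms by (simp add: strategy_def)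
  show ?thesis unfolding g_def using i1 i2 i3 by simp
qed

lemma exp_le:
  fixes f :: "nat \<Rightarrow> real"
  assumes "integrable (measure_pmf X) f" "\<And>x. f x \<le> c"
  shows "measure_pmf.expectation X f \<le> c"
proof -
  have "measure_pmf.expectation X f \<le> measure_pmf.expectation X (\<lambda>_. c)"
    using assms by (intro integral_mono) auto
  then show ?thesis by simp
qed

lemma exp_eq_max:
  fixes f :: "nat \<Rightarrow> real"
  assumes "integrable (measure_pmf X) f" "\<And>x. f x \<le> c" "measure_pmf.expectation X f \<ge> c"
    "x \<in> set_pmf X"
  shows "f x = c"
proof -
  have int: "integrable (measure_pmf X) (\<lambda>x. c - f x)" using assms(1) by simp
  have "measure_pmf.expectation X (\<lambda>x. c - f x) = c - measure_pmf.expectation X f"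
    using assms(1) by (simp add: Bochner_Integration.integral_diff)
  also have "\<dots> \<le> 0" using assms(3) by simp
  finally have le0: "measure_pmf.expectation X (\<lambda>x. c - f x) \<le> 0" .
  have ge0: "measure_pmf.expectation X (\<lambda>x. c - f x) \<ge> 0"
    using assms(2) by (simp add: Bochner_Integration.integral_nonneg)
  have "AE y in measure_pmf X. c - f y = 0"
    using integral_nonneg_eq_0_iff_AE[OF int] le0 ge0 assms(2) by simp
  then show ?thesis using assms(4) by (simp add: AE_measure_pmf_iff)
qed

lemma exp_const:
  fixes f :: "nat \<Rightarrow> real"
  assumes "\<And>x. x \<in> set_pmf X \<Longrightarrow> f x = c"
  shows "measure_pmf.expectation X f = c"
proof -
  have "measure_pmf.expectation X f = measure_pmf.expectation X (\<lambda>_. c)"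
    using assms by (intro integral_cong_AE) (auto simp: AE_measure_pmf_iff)
  then show ?thesis by simp
qed


lemma prob_lt_pmf_le1: "measure_pmf.prob (X::nat pmf) {y. y < x} + pmf X x \<le> 1"
proof -
  have "measure_pmf.prob X ({y. y < x} \<union> {x}) = measure_pmf.prob X {y. y < x} + measure_pmf.prob X {x}"
    by (rule measure_pmf.finite_measure_Union) auto
  moreover have "measure_pmf.prob X ({y. y < x} \<union> {x}) \<le> 1" by simp
  ultimately show ?thesis by (simp add: measure_pmf_single)
qed

lemma g0: "g v X 0 = v / 2 * pmf X 0"
  by (simp add: g_def)

lemma g2_bound:
  assumes "v > 0" "v < 2" "y \<noteq> 0"
  shows "g v X y < g v X 0"
proof (cases "y = 1")
  case True
  have e: "{z::nat. z < 1} = {0}" by auto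
  have "measure_pmf.prob X {z. z < 1} + pmf X 1 \<le> 1" by (rule prob_lt_pmf_le1)
  then have "pmf X 0 + pmf X 1 \<le> 1" by (simp add: e measure_pmf_single)
  then have "v / 2 * (pmf X 0 + pmf X 1) \<le> v / 2" using assms by (simp add: mult_left_le)
  then show ?thesis using True assms by (simp add: g_def e measure_pmf_single algebra_simps)
next
  case False
  then have y2: "real y \<ge> 2" using assms by linarith
  have h: "measure_pmf.prob X {z. z < y} + pmf X y \<le> 1" by (rule prob_lt_pmf_le1)
  have "g v X y \<le> v * (measure_pmf.prob X {z. z < y} + pmf X y) - real y"
    using assms by (simp add: g_def algebra_simps pmf_nonneg)
  also have "\<dots> \<le> v - real y" using h assms by (simp add: mult_left_le)
  also have "\<dots> < 0" using y2 assms by simp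
  also have "0 \<le> g v X 0" using assms by (simp add: g0 pmf_nonneg)
  finally show ?thesis .
qed

lemma g2_le:
  assumes "v > 0" "v < 2"
  shows "g v X y \<le> g v X 0"
  using g2_bound[OF assms, of y X] by (cases "y = 0") auto

lemma g_ret0: "g v (return_pmf 0) x = (if x = 0 then v / 2 else v - real x)"
  by (simp add: g_def measure_return_pmf indicator_def)

lemma strategy_finite: "finite (set_pmf X) \<Longrightarrow> strategy X"
  unfolding strategy_def by (rule integrable_measure_pmf_finite)

lemma strategy_ret: "strategy (return_pmf n)"
  by (rule strategy_finite) simp

lemma set_mix01: "set_pmf (mix01 a) \<subseteq> {0, 1}"
  unfolding mix01_def by auto

lemma strategy_mix01: "strategy (mix01 a)"
  by (rule strategy_finite, rule finite_subset[OF set_mix01]) simp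

lemma payoff_ret: "payoff v (return_pmf n) Y = g v Y n"
  by (simp add: payoff_g[OF strategy_ret] exp_const)

lemma mix01_eq:
  assumes "set_pmf X \<subseteq> {0, 1}"
  shows "X = mix01 (pmf X 1)"
proof -
  have "measure_pmf.prob X {0,1} = 1"
    using assms by (subst measure_pmf.prob_eq_1) (auto simp: AE_measure_pmf_iff)
  then have s1: "pmf X 0 + pmf X 1 = 1"
    by (simp add: measure_pmf.finite_measure_eq_sum_singleton measure_pmf_single)
  have a: "0 \<le> pmf X 1" "pmf X 1 \<le> 1" by (auto simp: pmf_le_1)
  show ?thesis
  proof (rule pmf_eqI)
    fix n
    show "pmf X n = pmf (mix01 (pmf X 1)) n"
    proof -
      consider "n = 0" | "n = 1" | "n \<noteq> 0 \<and> n \<noteq> 1" by blast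
      then show ?thesis
      proof cases
        case 1
        have v: "(\<lambda>b. if b then 1 else (0::nat)) -` {n} = {False}" using 1 by - (rule set_eqI, case_tac x, auto)
        have "pmf (mix01 (pmf X 1)) n = pmf (bernoulli_pmf (pmf X 1)) False"
          unfolding mix01_def pmf_map v measure_pmf_single ..
        also have "\<dots> = 1 - pmf X 1" using a by (rule pmf_bernoulli_False)
        also have "\<dots> = pmf X n" using 1 s1 by simp
        finally show ?thesis by (rule sym)
      next
        case 2
        have v: "(\<lambda>b. if b then 1 else (0::nat)) -` {n} = {True}" using 2 by - (rule set_eqI, case_tac x, auto)
        have "pmf (mix01 (pmf X 1)) n = pmf (bernoulli_pmf (pmf X 1)) True"
          unfolding mix01_def pmf_map v measure_pmf_single ..
        also have "\<dots> = pmf X 1" using a by (rule pmf_bernoulli_True)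
        finally show ?thesis using 2 by metis
      next
        case 3
        have v: "(\<lambda>b. if b then 1 else (0::nat)) -` {n} = {}" using 3 by - (rule set_eqI, case_tac x, auto)
        have "n \<notin> set_pmf X" using 3 assms by auto
        then have "pmf X n = 0" by (simp add: set_pmf_eq)
        moreover have "pmf (mix01 (pmf X 1)) n = 0"
          unfolding mix01_def pmf_map v by simp
        ultimately show ?thesis by (rule trans[OF _ sym])
      qed
    qed
  qed
qed


theorem theorem4:
  fixes v1 v2 :: real and X Y :: "nat pmf"
  assumes "v1 \<ge> v2" and "v2 > 0" and "v2 < 2"
  shows "nash_eq v1 v2 X Y \<longleftrightarrow>
           Y = return_pmf 0 \<and>
           (v1 / 2 > 1 \<longrightarrow> X = return_pmf 1) \<and>
           (v1 / 2 = 1 \<longrightarrow> (\<exists>\<alpha>\<in>{0..1}. X = mix01 \<alpha>)) \<and>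
           (v1 / 2 < 1 \<longrightarrow> X = return_pmf 0)"
proof
  assume N: "nash_eq v1 v2 X Y"
  have sX: "strategy X" and sY: "strategy Y" using N by (auto simp: nash_eq_def)
  have b1: "\<And>X'. strategy X' \<Longrightarrow> payoff v1 X' Y \<le> payoff v1 X Y"
    and b2: "\<And>Y'. strategy Y' \<Longrightarrow> payoff v2 Y' X \<le> payoff v2 Y X"
    using N by (auto simp: nash_eq_def)
  have "g v2 X 0 \<le> payoff v2 Y X" using b2[OF strategy_ret[of 0]] by (simp add: payoff_ret)
  then have "g v2 X 0 \<le> measure_pmf.expectation Y (g v2 X)" by (simp add: payoff_g[OF sY])
  then have eqY: "\<And>y. y \<in> set_pmf Y \<Longrightarrow> g v2 X y = g v2 X 0"
    using exp_eq_max[OF g_integrable[OF sY] g2_le[OF assms(2,3)]] by blast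
  have "set_pmf Y \<subseteq> {0}"
  proof
    fix y assume "y \<in> set_pmf Y"
    then have "g v2 X y = g v2 X 0" by (rule eqY)
    then show "y \<in> {0}" using g2_bound[OF assms(2,3), of y X] by (cases "y = 0") auto
  qed
  then have Y0: "Y = return_pmf 0" by (simp add: set_pmf_subset_singleton)
  have key: "\<forall>x\<in>set_pmf X. g v1 (return_pmf 0) x = c"
    if le: "\<And>x. g v1 (return_pmf 0) x \<le> c" and k: "g v1 (return_pmf 0) k = c" for c k
  proof -
    have "c \<le> measure_pmf.expectation X (g v1 (return_pmf 0))"
      using b1[OF strategy_ret[of k]] k by (simp add: payoff_ret payoff_g[OF sX] Y0)
    then show ?thesis using exp_eq_max[OF g_integrable[OF sX] le] by blast
  qed
  have xge1: "\<And>x::nat. x \<noteq> 0 \<Longrightarrow> real x \<ge> 1" by simp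
  consider "v1 > 2" | "v1 = 2" | "v1 < 2" by linarith
  then show "Y = return_pmf 0 \<and>
           (v1 / 2 > 1 \<longrightarrow> X = return_pmf 1) \<and>
           (v1 / 2 = 1 \<longrightarrow> (\<exists>\<alpha>\<in>{0..1}. X = mix01 \<alpha>)) \<and>
           (v1 / 2 < 1 \<longrightarrow> X = return_pmf 0)"
  proof cases
    case 1
    have "\<forall>x\<in>set_pmf X. g v1 (return_pmf 0) x = v1 - 1"
      by (rule key[of _ 1]) (use 1 xge1 in \<open>auto simp: g_ret0\<close>)
    then have "set_pmf X \<subseteq> {1}" using 1 by (force simp: g_ret0 split: if_splits)
    then show ?thesis using 1 Y0 by (simp add: set_pmf_subset_singleton)
  next
    case 2
    have "\<forall>x\<in>set_pmf X. g v1 (return_pmf 0) x = 1"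
      by (rule key[of _ 0]) (use 2 xge1 in \<open>auto simp: g_ret0\<close>)
    then have "set_pmf X \<subseteq> {0, 1}" using 2 by (force simp: g_ret0 split: if_splits)
    then have "X = mix01 (pmf X 1)" by (rule mix01_eq)
    moreover have "pmf X 1 \<in> {0..1}" by (simp add: pmf_le_1)
    ultimately show ?thesis using 2 Y0 by auto
  next
    case 3
    have "\<forall>x\<in>set_pmf X. g v1 (return_pmf 0) x = v1 / 2"
      by (rule key[of _ 0]) (use 3 xge1 in \<open>auto simp: g_ret0\<close>)
    then have "set_pmf X \<subseteq> {0}" using 3 xge1 by (force simp: g_ret0 split: if_splits)
    then show ?thesis using 3 Y0 by (simp add: set_pmf_subset_singleton)
  qed
next
  assume R: "Y = return_pmf 0 \<and>
           (v1 / 2 > 1 \<longrightarrow> X = return_pmf 1) \<and>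
           (v1 / 2 = 1 \<longrightarrow> (\<exists>\<alpha>\<in>{0..1}. X = mix01 \<alpha>)) \<and>
           (v1 / 2 < 1 \<longrightarrow> X = return_pmf 0)"
  then have Y0: "Y = return_pmf 0" by simp
  define c where "c = (if v1 > 2 then v1 - 1 else v1 / 2)"
  have xge1: "\<And>x::nat. x \<noteq> 0 \<Longrightarrow> real x \<ge> 1" by simp
  have le: "g v1 (return_pmf 0) x \<le> c" for x
    using xge1[of x] by (auto simp: g_ret0 c_def)
  have sXc: "strategy X \<and> (\<forall>x\<in>set_pmf X. g v1 (return_pmf 0) x = c)"
  proof -
    consider "v1 > 2" | "v1 = 2" | "v1 < 2" by linarith
    then show ?thesis
    proof cases
      case 1
      then have "X = return_pmf 1" using R by auto
      then show ?thesis using 1 by (simp add: strategy_ret g_ret0 c_def)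
    next
      case 2
      then obtain a where "X = mix01 a" using R by auto
      then show ?thesis using 2 set_mix01[of a] strategy_mix01[of a]
        by (force simp: g_ret0 c_def)
    next
      case 3
      then have "X = return_pmf 0" using R by auto
      then show ?thesis using 3 by (simp add: strategy_ret g_ret0 c_def)
    qed
  qed
  then have sX: "strategy X" by simp
  have pX: "payoff v1 X Y = c"
    using sXc by (simp add: payoff_g[OF sX] Y0 exp_const)
  have pY: "payoff v2 Y X = g v2 X 0" by (simp add: Y0 payoff_ret)
  show "nash_eq v1 v2 X Y"
    unfolding nash_eq_def
  proof (intro conjI allI impI)
    show "strategy X" by (rule sX)
    show "strategy Y" by (simp add: Y0 strategy_ret)
    fix X' assume "strategy X'"
    then show "payoff v1 X' Y \<le> payoff v1 X Y"
      unfolding payoff_g[OF \<open>strategy X'\<close>] Y0 pX[unfolded Y0]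
      by (rule exp_le[OF g_integrable le])
  next
    fix Y' assume "strategy Y'"
    then show "payoff v2 Y' X \<le> payoff v2 Y X"
      unfolding pY payoff_g[OF \<open>strategy Y'\<close>]
      by (rule exp_le[OF g_integrable g2_le[OF assms(2,3)]])
  qed
qed

end
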